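(* Let $X$ be a coverable vertex parameter, let $G$ be a graph, and let $v\in V(G)$. If $X(G)=X(G-v)+1$, then $\mathcal{R}^{\mathrm{TE}}_X(G-v)$ is isomorphic to a subgraph of $\mathcal{R}^{\mathrm{TE}}_X(G)$ and $\mathcal{R}^{\mathrm{TS}}_X(G-v)$ is isomorphic to a subgraph of $\mathcal{R}^{\mathrm{TS}}_X(G)$.
   Context: All graphs are finite and simple. A graph parameter $X$ is a vertex parameter defined by property $x$ if for every graph $G$, $X(G)$ equals either (for every graph) the maximum, or (for every graph) the minimum, of $|B|$ over all $B\subseteq V(G)$ having property $x$ in $G$. $X$ is coverable if for every graph $G$ and every $v\in V(G)$, whenever $B$ has property $x$ in $G-v$, the set $B\cup\{v\}$ has property $x$ in $G$. The token exchange graph $\mathcal{R}^{\mathrm{TE}}_X(G)$ has as vertices all $S\subseteq V(G)$ with $|S|=X(G)$ having property $x$ in $G$, with $S_1S_2$ an edge iff there exist $v_1\in S_1\setminus S_2$, $v_2\in S_2\setminus S_1$ with $S_1\setminus\{v_1\}=S_2\setminus\{v_2\}$; the token sliding graph $\mathcal{R}^{\mathrm{TS}}_X(G)$ has the same vertices with the additional requirement $v_1v_2\in E(G)$. *)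

theory Defs
  imports Main
begin

type_synonym 'a graph = "'a set \<times> 'a set set"

definition verts :: "'a graph \<Rightarrow> 'a set" where "verts G = fst G"
definition edges :: "'a graph \<Rightarrow> 'a set set" where "edges G = snd G"

definition graph :: "'a graph \<Rightarrow> bool" where
  "graph G \<longleftrightarrow> finite (verts G) \<and> (\<forall>e\<in>edges G. e \<subseteq> verts G \<and> card e = 2)"

definition del_vert :: "'a graph \<Rightarrow> 'a \<Rightarrow> 'a graph" where
  "del_vert G v = (verts G - {v}, {e \<in> edges G. v \<notin> e})"

definition prop_sizes :: "('a graph \<Rightarrow> 'a set \<Rightarrow> bool) \<Rightarrow> 'a graph \<Rightarrow> nat set" where
  "prop_sizes P G = {card B | B. B \<subseteq> verts G \<and> P G B}"

definition vertex_parameter :: "('a graph \<Rightarrow> nat) \<Rightarrow> ('a graph \<Rightarrow> 'a set \<Rightarrow> bool) \<Rightarrow> bool" where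
  "vertex_parameter X P \<longleftrightarrow>
     (\<forall>G. graph G \<longrightarrow> X G \<in> prop_sizes P G \<and> (\<forall>k\<in>prop_sizes P G. k \<le> X G)) \<or>
     (\<forall>G. graph G \<longrightarrow> X G \<in> prop_sizes P G \<and> (\<forall>k\<in>prop_sizes P G. X G \<le> k))"

definition coverable :: "('a graph \<Rightarrow> 'a set \<Rightarrow> bool) \<Rightarrow> bool" where
  "coverable P \<longleftrightarrow>
     (\<forall>G v B. graph G \<and> v \<in> verts G \<and> B \<subseteq> verts (del_vert G v) \<and> P (del_vert G v) B
        \<longrightarrow> P G (B \<union> {v}))"

definition TE_graph :: "('a graph \<Rightarrow> nat) \<Rightarrow> ('a graph \<Rightarrow> 'a set \<Rightarrow> bool) \<Rightarrow> 'a graph \<Rightarrow> 'a set graph" where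
  "TE_graph X P G =
     ({S. S \<subseteq> verts G \<and> card S = X G \<and> P G S},
      {{S1, S2} | S1 S2. S1 \<subseteq> verts G \<and> card S1 = X G \<and> P G S1 \<and>
                         S2 \<subseteq> verts G \<and> card S2 = X G \<and> P G S2 \<and>
         (\<exists>v1 v2. v1 \<in> S1 - S2 \<and> v2 \<in> S2 - S1 \<and> S1 - {v1} = S2 - {v2})})"

definition TS_graph :: "('a graph \<Rightarrow> nat) \<Rightarrow> ('a graph \<Rightarrow> 'a set \<Rightarrow> bool) \<Rightarrow> 'a graph \<Rightarrow> 'a set graph" where
  "TS_graph X P G =
     ({S. S \<subseteq> verts G \<and> card S = X G \<and> P G S},
      {{S1, S2} | S1 S2. S1 \<subseteq> verts G \<and> card S1 = X G \<and> P G S1 \<and>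
                         S2 \<subseteq> verts G \<and> card S2 = X G \<and> P G S2 \<and>
         (\<exists>v1 v2. v1 \<in> S1 - S2 \<and> v2 \<in> S2 - S1 \<and> S1 - {v1} = S2 - {v2} \<and> {v1, v2} \<in> edges G)})"

definition iso_subgraph :: "'b graph \<Rightarrow> 'c graph \<Rightarrow> bool" where
  "iso_subgraph H K \<longleftrightarrow>
     (\<exists>f. inj_on f (verts H) \<and> f ` verts H \<subseteq> verts K \<and> (\<forall>e\<in>edges H. f ` e \<in> edges K))"

end

theory Submission
  imports Defs
begin

lemma key:
  assumes cov: "coverable P" and g: "graph G" and vG: "v \<in> verts G"
    and XX: "X G = X (del_vert G v) + 1"
    and S: "S \<subseteq> verts (del_vert G v)" "card S = X (del_vert G v)" "P (del_vert G v) S"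
  shows "S \<union> {v} \<subseteq> verts G \<and> card (S \<union> {v}) = X G \<and> P G (S \<union> {v})"
proof -
  have fin: "finite S" using S(1) g finite_subset unfolding graph_def del_vert_def verts_def by auto
  have vn: "v \<notin> S" using S(1) unfolding del_vert_def verts_def by auto
  have "P G (S \<union> {v})" using cov g vG S unfolding coverable_def by blast
  moreover have "S \<union> {v} \<subseteq> verts G" using S(1) vG unfolding del_vert_def verts_def by auto
  moreover have "card (S \<union> {v}) = X G" using fin vn S(2) XX by simp
  ultimately show ?thesis by blast
qed

lemma injf: "inj_on (\<lambda>S. S \<union> {v}) {S. S \<subseteq> verts (del_vert G v) \<and> Q S}"
  unfolding inj_on_def del_vert_def verts_def by auto

theorem theorem3p6:
  fixes X :: "'a graph \<Rightarrow> nat" and P :: "'a graph \<Rightarrow> 'a set \<Rightarrow> bool"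
    and G :: "'a graph" and v :: 'a
  assumes "vertex_parameter X P"
    and "coverable P"
    and "graph G"
    and "v \<in> verts G"
    and "X G = X (del_vert G v) + 1"
  shows "iso_subgraph (TE_graph X P (del_vert G v)) (TE_graph X P G)
       \<and> iso_subgraph (TS_graph X P (del_vert G v)) (TS_graph X P G)"
proof -
  note K = key[OF assms(2-5)]
  have vnot: "\<And>S. S \<subseteq> verts (del_vert G v) \<Longrightarrow> v \<notin> S"
    unfolding del_vert_def verts_def by auto
  have edg: "edges (del_vert G v) \<subseteq> edges G" unfolding del_vert_def edges_def by auto
  have ex: "\<And>S1 S2 v1 v2. v \<notin> S1 \<Longrightarrow> v \<notin> S2 \<Longrightarrow> v1 \<in> S1 - S2 \<Longrightarrow> v2 \<in> S2 - S1
     \<Longrightarrow> S1 - {v1} = S2 - {v2} \<Longrightarrow> v1 \<in> (S1 \<union> {v}) - (S2 \<union> {v}) \<and> v2 \<in> (S2 \<union> {v}) - (S1 \<union> {v})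
        \<and> (S1 \<union> {v}) - {v1} = (S2 \<union> {v}) - {v2}"
  proof -
    fix S1 S2 v1 v2 assume a: "v \<notin> S1" "v \<notin> S2" "v1 \<in> S1 - S2" "v2 \<in> S2 - S1" "S1 - {v1} = S2 - {v2}"
    have n1: "v1 \<noteq> v" "v2 \<noteq> v" using a by auto
    have "(S1 \<union> {v}) - {v1} = (S1 - {v1}) \<union> {v}" using n1 by blast
    also have "\<dots> = (S2 - {v2}) \<union> {v}" using a(5) by simp
    also have "\<dots> = (S2 \<union> {v}) - {v2}" using n1 by blast
    finally show "v1 \<in> (S1 \<union> {v}) - (S2 \<union> {v}) \<and> v2 \<in> (S2 \<union> {v}) - (S1 \<union> {v})
        \<and> (S1 \<union> {v}) - {v1} = (S2 \<union> {v}) - {v2}" using a n1 by blast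
  qed
  have A: "iso_subgraph (TE_graph X P (del_vert G v)) (TE_graph X P G)"
    unfolding iso_subgraph_def
  proof (intro exI[of _ "\<lambda>S. S \<union> {v}"] conjI ballI)
    show "inj_on (\<lambda>S. S \<union> {v}) (verts (TE_graph X P (del_vert G v)))"
      unfolding TE_graph_def verts_def[of "(_, _)"] fst_conv by (rule injf)
    show "(\<lambda>S. S \<union> {v}) ` verts (TE_graph X P (del_vert G v)) \<subseteq> verts (TE_graph X P G)"
      unfolding TE_graph_def verts_def[of "(_, _)"] fst_conv using K by auto
  next
    fix e assume "e \<in> edges (TE_graph X P (del_vert G v))"
    then obtain S1 S2 where e: "e = {S1, S2}" and h: "S1 \<subseteq> verts (del_vert G v)"
      "card S1 = X (del_vert G v)" "P (del_vert G v) S1" "S2 \<subseteq> verts (del_vert G v)"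
      "card S2 = X (del_vert G v)" "P (del_vert G v) S2" and
      hx: "\<exists>v1 v2. v1 \<in> S1 - S2 \<and> v2 \<in> S2 - S1 \<and> S1 - {v1} = S2 - {v2}"
      unfolding TE_graph_def edges_def[of "(_, _)"] snd_conv mem_Collect_eq
      apply (elim exE conjE) apply (rule that) apply assumption+ by blast
    from hx obtain v1 v2 where h7: "v1 \<in> S1 - S2" "v2 \<in> S2 - S1" "S1 - {v1} = S2 - {v2}"
      by (elim exE conjE) (rule that, assumption+)
    have k1: "S1 \<union> {v} \<subseteq> verts G \<and> card (S1 \<union> {v}) = X G \<and> P G (S1 \<union> {v})" using K[OF h(1-3)] by blast
    have k2: "S2 \<union> {v} \<subseteq> verts G \<and> card (S2 \<union> {v}) = X G \<and> P G (S2 \<union> {v})" using K[OF h(4-6)] by blast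
    have x: "v1 \<in> (S1 \<union> {v}) - (S2 \<union> {v}) \<and> v2 \<in> (S2 \<union> {v}) - (S1 \<union> {v})
        \<and> (S1 \<union> {v}) - {v1} = (S2 \<union> {v}) - {v2}" using ex[OF vnot[OF h(1)] vnot[OF h(4)] h7(1-3)] by blast
    show "(\<lambda>S. S \<union> {v}) ` e \<in> edges (TE_graph X P G)"
      unfolding TE_graph_def edges_def snd_conv e image_insert image_empty
      apply (rule CollectI)
      apply (rule exI[of _ "S1 \<union> {v}"], rule exI[of _ "S2 \<union> {v}"])
      using k1 k2 x by (intro conjI refl exI[of _ v1] exI[of _ v2]) auto
  qed
  have B: "iso_subgraph (TS_graph X P (del_vert G v)) (TS_graph X P G)"
    unfolding iso_subgraph_def
  proof (intro exI[of _ "\<lambda>S. S \<union> {v}"] conjI ballI)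
    show "inj_on (\<lambda>S. S \<union> {v}) (verts (TS_graph X P (del_vert G v)))"
      unfolding TS_graph_def verts_def[of "(_, _)"] fst_conv by (rule injf)
    show "(\<lambda>S. S \<union> {v}) ` verts (TS_graph X P (del_vert G v)) \<subseteq> verts (TS_graph X P G)"
      unfolding TS_graph_def verts_def[of "(_, _)"] fst_conv using K by auto
  next
    fix e assume "e \<in> edges (TS_graph X P (del_vert G v))"
    then obtain S1 S2 where e: "e = {S1, S2}" and h: "S1 \<subseteq> verts (del_vert G v)"
      "card S1 = X (del_vert G v)" "P (del_vert G v) S1" "S2 \<subseteq> verts (del_vert G v)"
      "card S2 = X (del_vert G v)" "P (del_vert G v) S2" and
      hx: "\<exists>v1 v2. v1 \<in> S1 - S2 \<and> v2 \<in> S2 - S1 \<and> S1 - {v1} = S2 - {v2} \<and> {v1, v2} \<in> edges (del_vert G v)"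
      unfolding TS_graph_def edges_def[of "(_, _)"] snd_conv mem_Collect_eq
      apply (elim exE conjE) apply (rule that) apply assumption+ by blast
    from hx obtain v1 v2 where h7: "v1 \<in> S1 - S2" "v2 \<in> S2 - S1" "S1 - {v1} = S2 - {v2}" "{v1, v2} \<in> edges (del_vert G v)"
      by (elim exE conjE) (rule that, assumption+)
    have k1: "S1 \<union> {v} \<subseteq> verts G \<and> card (S1 \<union> {v}) = X G \<and> P G (S1 \<union> {v})" using K[OF h(1-3)] by blast
    have k2: "S2 \<union> {v} \<subseteq> verts G \<and> card (S2 \<union> {v}) = X G \<and> P G (S2 \<union> {v})" using K[OF h(4-6)] by blast
    have x: "v1 \<in> (S1 \<union> {v}) - (S2 \<union> {v}) \<and> v2 \<in> (S2 \<union> {v}) - (S1 \<union> {v})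
        \<and> (S1 \<union> {v}) - {v1} = (S2 \<union> {v}) - {v2}" using ex[OF vnot[OF h(1)] vnot[OF h(4)] h7(1-3)] by blast
    have y: "{v1, v2} \<in> edges G" using h7(4) edg by blast
    show "(\<lambda>S. S \<union> {v}) ` e \<in> edges (TS_graph X P G)"
      unfolding TS_graph_def edges_def[of "(_, _)"] snd_conv e image_insert image_empty
      apply (rule CollectI)
      apply (rule exI[of _ "S1 \<union> {v}"], rule exI[of _ "S2 \<union> {v}"])
      using k1 k2 x y by (intro conjI refl exI[of _ v1] exI[of _ v2]) auto
  qed
  show ?thesis using A B by blast
qed

end
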